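(* For each positive integer $m$, with $L=\tfrac13(4^m-1)$, there are infinitely many indices $i\ge0$ such that $c_i=c_{i+1}=\cdots=c_{i+L-1}=0$. In particular, the sequence $(c_n)_{n\ge0}$ contains arbitrarily long blocks of consecutive $0$'s.
   Context: For $n\in\mathbb{N}$ let $s_2(n)$ be the sum of the binary digits of $n$ and $t_n=s_2(n)\bmod 2$ (the Prouhet–Thue–Morse sequence). Let $F(X)=\sum_{n\ge1}t_nX^n\in\mathbb{F}_2[[X]]$ and let $G(X)=\sum_{n\ge1}c_nX^n\in\mathbb{F}_2[[X]]$ be its compositional inverse, i.e. $F(G(X))=G(F(X))=X$; set $c_0=0$. The $c_n$ are identified with integers in $\{0,1\}$. *)

theory Defs
  imports "HOL-Computational_Algebra.Formal_Power_Series" "HOL-Library.Z2"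
begin

fun s2 :: "nat \<Rightarrow> nat" where
  "s2 n = (if n = 0 then 0 else n mod 2 + s2 (n div 2))"

definition tm :: "nat \<Rightarrow> bit" where
  "tm n = of_nat (s2 n mod 2)"

definition TM_F :: "bit fps" where
  "TM_F = Abs_fps (\<lambda>n. if n = 0 then 0 else tm n)"

definition TM_G :: "bit fps" where
  "TM_G = fps_inv TM_F"

definition c :: "nat \<Rightarrow> bit" where
  "c n = fps_nth TM_G n"

end

theory Submission
  imports Defs "HOL-Library.Infinite_Set"
begin
unbundle fps_syntax
declare add_bit_eq_xor[simp del] mult_bit_eq_and[simp del]


lemma bit_mult_self[simp]: "x * x = (x::bit)"
  by (cases x) simp_all

lemma bit_add_self[simp]: "x + x = (0::bit)"
  by (cases x) simp_all

lemma sym_sum: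
  fixes g :: "nat \<Rightarrow> bit"
  shows "(\<And>i. a \<le> i \<Longrightarrow> i \<le> a + k \<Longrightarrow> g i = g (2*a + k - i)) \<Longrightarrow>
     sum g {a..a+k} = (if even k then g (a + k div 2) else 0)"
proof (induction k arbitrary: a rule: less_induct)
  case (less k)
  show ?case
  proof (cases "k \<le> 1")
    case True
    then consider "k = 0" | "k = 1" by linarith
    then show ?thesis
    proof cases
      case 1 then show ?thesis by simp
    next
      case 2
      have "g (a+1) = g a" using less.prems[of "a+1"] 2 by simp
      moreover have "{a..a+k} = {a, a+1}" using 2 by auto
      ultimately show ?thesis using 2 by simp
    qed
  next
    case False
    then obtain k' where k': "k = k' + 2" using le_add_diff_inverse2 by (metis nat_le_linear not_less_eq_eq one_add_one plus_1_eq_Suc)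
    have eq: "2*(a+1)+k' = 2*a+k" using k' by simp
    have IH: "sum g {a+1..(a+1)+k'} = (if even k' then g ((a+1) + k' div 2) else 0)"
    proof (rule less.IH)
      show "k' < k" using k' by simp
      fix i assume "a + 1 \<le> i" "i \<le> a + 1 + k'"
      then have "g i = g (2*a + k - i)" using less.prems[of i] k' by simp
      then show "g i = g (2*(a+1) + k' - i)" by (simp only: eq)
    qed
    have set: "{a..a+k} = insert a (insert (a+k) {a+1..(a+1)+k'})" using k' by auto
    have ga: "g (a+k) = g a" using less.prems[of "a+k"] by simp
    have "sum g {a..a+k} = g a + (g (a+k) + sum g {a+1..(a+1)+k'})"
      unfolding set using k' by simp
    also have "\<dots> = sum g {a+1..(a+1)+k'}" unfolding ga add.assoc[symmetric] by simp
    finally have s: "sum g {a..a+k} = sum g {a+1..(a+1)+k'}" .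
    have "even k = even k'" "a + k div 2 = (a+1) + k' div 2" using k' by auto
    then show ?thesis using IH s by simp
  qed
qed

lemma frob_nth:
  fixes f :: "bit fps"
  shows "(f*f) $ n = (if even n then f $ (n div 2) else 0)"
proof -
  have "(f*f) $ n = (\<Sum>i=0..0+n. f $ i * f $ (n-i))" by (simp add: fps_mult_nth)
  also have "\<dots> = (if even n then f $ (0 + n div 2) * f $ (n - (0 + n div 2)) else 0)"
  proof (rule sym_sum)
    fix i assume "0 \<le> i" "i \<le> 0 + n"
    then have "n - (n - i) = i" by simp
    then show "f $ i * f $ (n - i) = f $ (2*0 + n - i) * f $ (n - (2*0 + n - i))"
      by (simp add: mult.commute)
  qed
  also have "\<dots> = (if even n then f $ (n div 2) else 0)"
  proof -
    have "even n \<Longrightarrow> n - n div 2 = n div 2" by auto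
    then show ?thesis by simp
  qed
  finally show ?thesis .
qed

definition sp :: "nat \<Rightarrow> bit fps \<Rightarrow> bit fps" where
  "sp k f = Abs_fps (\<lambda>n. if k dvd n then f $ (n div k) else 0)"

lemma sp_nth: "sp k f $ n = (if k dvd n then f $ (n div k) else 0)"
  by (simp add: sp_def)

lemma frob: "f * f = sp 2 (f::bit fps)"
  by (rule fps_ext) (simp add: frob_nth sp_nth)

lemma sp_sp: "sp 2 (sp 2 f) = sp 4 f"
proof (rule fps_ext)
  fix n
  show "sp 2 (sp 2 f) $ n = sp 4 f $ n"
  proof (cases "4 dvd n")
    case True
    then obtain q where "n = 4*q" by blast
    then show ?thesis by (simp add: sp_nth)
  next
    case False
    then show ?thesis
      by (auto simp: sp_nth elim!: dvdE)
  qed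
qed

lemma frob4: "(f::bit fps)^4 = sp 4 f"
proof -
  have "f^4 = (f*f)*(f*f)" by (simp add: power_numeral_reduce eval_nat_numeral algebra_simps)
  also have "\<dots> = sp 2 (sp 2 f)" by (simp only: frob)
  also have "\<dots> = sp 4 f" by (rule sp_sp)
  finally show ?thesis .
qed

lemma fps_add_self[simp]: "f + f = (0::bit fps)"
  by (rule fps_ext) (simp only: fps_add_nth bit_add_self fps_zero_nth)

lemma fps_two: "(2::bit fps) = 0"
  by (metis fps_add_self one_add_one)

lemma two_mult: "2 * (a::bit fps) = 0"
  by (simp add: fps_two)


declare s2.simps[simp del]

lemma s2_0: "s2 0 = 0"
  by (subst s2.simps) simp

lemma s2_double: "s2 (2*n) = s2 n"
proof (cases "n = 0")
  case True then show ?thesis by (simp add: s2_0)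
next
  case False then show ?thesis by (subst s2.simps) simp
qed

lemma s2_double1: "s2 (2*n+1) = s2 n + 1"
  by (subst s2.simps) simp

lemma tm_double: "tm (2*n) = tm n"
  by (simp only: tm_def s2_double)

lemma tm_double1: "tm (2*n+1) = tm n + 1"
  unfolding tm_def s2_double1
  by (cases "even (s2 n)") (auto simp: odd_iff_mod_2_eq_one even_iff_mod_2_eq_zero mod_Suc)

lemma F_nth: "TM_F $ n = tm n"
  by (simp add: TM_F_def tm_def s2_0)

definition EE :: "bit fps" where "EE = Abs_fps (\<lambda>n. if even n then 1 else 0)"

lemma EE_inv: "EE * (1 + fps_X)^2 = 1"
proof -
  have a: "EE * (1 + fps_X) = Abs_fps (\<lambda>n. 1)"
    by (rule fps_ext) (simp add: EE_def distrib_left)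
  have "EE * (1 + fps_X)^2 = (EE * (1 + fps_X)) * (1 + fps_X)"
    by (simp only: power2_eq_square mult.assoc)
  also have "\<dots> = Abs_fps (\<lambda>n. 1) * (1 + fps_X)" by (simp only: a)
  also have "\<dots> = 1" by (rule fps_ext) (simp add: distrib_left)
  finally show ?thesis .
qed

lemma F_split: "TM_F = sp 2 TM_F * (1 + fps_X) + fps_X * EE"
proof (rule fps_ext)
  fix n
  show "TM_F $ n = (sp 2 TM_F * (1 + fps_X) + fps_X * EE) $ n"
  proof (cases "even n")
    case True
    then obtain m where m: "n = 2*m" by blast
    show ?thesis
    proof (cases "m = 0")
      case True then show ?thesis by (simp add: m F_nth tm_def s2_0 sp_nth distrib_left EE_def)
    next
      case False
      then have "odd (2*m - 1)" by presburger
      then show ?thesis by (simp add: m F_nth sp_nth distrib_left tm_double EE_def)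
    qed
  next
    case False
    then obtain m where m: "n = 2*m+1" by (metis oddE)
    have t: "tm (Suc (2*m)) = 1 + tm m" using tm_double1[of m] by (simp add: add.commute)
    show ?thesis by (simp add: m F_nth sp_nth distrib_left t EE_def)
  qed
qed

lemma F_eq: "(1 + fps_X)^2 * TM_F = (1 + fps_X)^3 * TM_F^2 + fps_X"
proof -
  have "(1 + fps_X)^2 * TM_F = (1 + fps_X)^2 * (TM_F * TM_F * (1 + fps_X) + fps_X * EE)"
    by (subst F_split) (simp only: frob)
  also have "\<dots> = (1 + fps_X)^3 * TM_F^2 + fps_X * (EE * (1 + fps_X)^2)"
    by algebra
  finally show ?thesis by (simp only: EE_inv mult_1_right)
qed



lemma G0: "TM_G $ 0 = 0"
  by (simp add: TM_G_def fps_inv_def)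

lemma FG: "TM_F oo TM_G = fps_X"
  unfolding TM_G_def
  by (rule fps_inv_right) (simp_all add: F_nth tm_def s2_0 s2_double1[of 0, simplified])

lemma comp1X: "(1 + fps_X) oo TM_G = 1 + TM_G"
  by (simp only: fps_compose_add_distrib fps_compose_1 fps_X_fps_compose_startby0[OF G0])

lemma G_eq: "(1 + TM_G)^2 * fps_X = (1 + TM_G)^3 * fps_X^2 + TM_G"
proof -
  have "((1 + fps_X)^2 * TM_F) oo TM_G = ((1 + fps_X)^3 * TM_F^2 + fps_X) oo TM_G"
    by (simp only: F_eq)
  moreover have "((1 + fps_X)^2 * TM_F) oo TM_G = (1 + TM_G)^2 * fps_X"
    by (simp only: fps_compose_mult_distrib[OF G0] fps_compose_power[OF G0, symmetric] comp1X FG)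
  moreover have "((1 + fps_X)^3 * TM_F^2 + fps_X) oo TM_G = (1 + TM_G)^3 * fps_X^2 + TM_G"
    by (simp only: fps_compose_add_distrib fps_compose_mult_distrib[OF G0]
       fps_compose_power[OF G0, symmetric] comp1X fps_compose_1 FG fps_X_fps_compose_startby0[OF G0])
  ultimately show ?thesis by metis
qed

lemma QQ_cube_gen: 
  fixes G :: "bit fps"
  assumes G_eq: "(1 + G)^2 * fps_X = (1 + G)^3 * fps_X^2 + G"
  shows "(1 + fps_X * (1 + G))^3 = 1 + fps_X"
proof -
  define H where "H = fps_X * (1 + G)"
  have e1: "H^2 = H^3 + fps_X * G"
  proof -
    have "H^2 = fps_X * ((1 + G)^2 * fps_X)" unfolding H_def by algebra
    also have "\<dots> = fps_X * ((1 + G)^3 * fps_X^2 + G)" using G_eq by simp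
    also have "\<dots> = H^3 + fps_X * G" unfolding H_def by algebra
    finally show ?thesis .
  qed
  have e2: "fps_X * G = H + fps_X"
  proof -
    have "H + fps_X = fps_X * G + 2 * fps_X" unfolding H_def by (simp add: algebra_simps)
    then show ?thesis by (simp only: two_mult add_0_right)
  qed
  have "(1 + fps_X * (1 + G))^3 = 1 + H + H^2 + H^3 + 2 * (H + H^2)"
    unfolding H_def[symmetric] by (simp add: algebra_simps power2_eq_square power3_eq_cube)
  also have "\<dots> = 1 + H + H^2 + H^3" by (simp only: two_mult add_0_right)
  also have "\<dots> = 1 + H + (H^3 + (H + fps_X)) + H^3" by (simp only: e1 e2)
  also have "\<dots> = 1 + fps_X + 2 * (H + H^3)" by algebra
  finally show ?thesis by (simp only: two_mult add_0_right)
qed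

lemma cube_unique:
  fixes P Q :: "bit fps"
  assumes "P^3 = Q^3" "P $ 0 = 1" "Q $ 0 = 1"
  shows "P = Q"
proof -
  have "(P - Q) * (P^2 + P*Q + Q^2) = P^3 - Q^3" by algebra
  then have "(P - Q) * (P^2 + P*Q + Q^2) = 0" using assms by simp
  moreover have "(P^2 + P*Q + Q^2) $ 0 \<noteq> 0"
    using assms by (simp add: power2_eq_square)
  then have "P^2 + P*Q + Q^2 \<noteq> 0" by (metis fps_zero_nth)
  ultimately show ?thesis by simp
qed

definition QQ :: "bit fps" where "QQ = 1 + fps_X * (1 + TM_G)"

lemma QQ_cube: "QQ^3 = 1 + fps_X"
  unfolding QQ_def by (rule QQ_cube_gen[OF G_eq])

lemma QQ_nth: "n \<ge> 1 \<Longrightarrow> QQ $ (n+1) = c n"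
  by (simp add: QQ_def distrib_left c_def)

lemma QQ0: "QQ $ 0 = 1"
  by (simp add: QQ_def)



fun rr :: "nat \<Rightarrow> bool" where
  "rr q = (if q = 0 then True else q mod 4 < 2 \<and> rr (q div 4))"

declare rr.simps[simp del]

lemma rr0: "rr 0" by (subst rr.simps) simp

lemma rr_eq: "d < 4 \<Longrightarrow> rr (4*a + d) = (d < 2 \<and> (4*a + d = 0 \<or> rr a))"
  by (subst rr.simps) auto

definition PP :: "bit fps" where
  "PP = Abs_fps (\<lambda>m. of_bool (m mod 8 < 4 \<and> rr (m div 8)))"

lemma PP_nth8: "b < 8 \<Longrightarrow> PP $ (8*q + b) = of_bool (b < 4 \<and> rr q)"
  by (simp add: PP_def)

lemma PP_mult: "PP * (1 + fps_X) = sp 4 PP"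
proof (rule fps_ext)
  fix m :: nat
  obtain q b where mq: "m = 8*q + b" and b: "b < 8"
    using div_mod_decomp[of m 8] by (metis mult.commute mod_less_divisor zero_less_numeral)
  obtain a d where qa: "q = 4*a + d" and d: "d < 4"
    using div_mod_decomp[of q 4] by (metis mult.commute mod_less_divisor zero_less_numeral)
  have L: "(PP * (1 + fps_X)) $ m = PP $ m + (if m = 0 then 0 else PP $ (m - 1))"
    by (simp add: distrib_left)
  have R: "sp 4 PP $ m = (if 4 dvd m then PP $ (m div 4) else 0)" by (rule sp_nth)
  have rq: "rr q = (d < 2 \<and> (q = 0 \<or> rr a))" using rr_eq[OF d, of a] qa by simp
  show "(PP * (1 + fps_X)) $ m = sp 4 PP $ m"
  proof (cases "b = 0")
    case b0: True
    show ?thesis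
    proof (cases "q = 0")
      case True
      then have "m = 0" using mq b0 by simp
      then show ?thesis using L R by simp
    next
      case False
      have m1: "m - 1 = 8*(q-1) + 7" using False mq b0 by simp
      have m4: "m div 4 = 8*a + 2*d" "4 dvd m" using mq qa b0 by auto
      have "(PP * (1 + fps_X)) $ m = of_bool (rr q)"
        unfolding L m1 using False mq b0 PP_nth8[of 0 q] PP_nth8[of 7 "q-1"] by simp
      moreover have "sp 4 PP $ m = of_bool (d < 2 \<and> rr a)"
        unfolding R using m4 PP_nth8[of "2*d" a] d by simp
      ultimately show ?thesis using rq False by simp
    qed
  next
    case bn0: False
    have m1: "m - 1 = 8*q + (b - 1)" "m \<noteq> 0" using bn0 mq by auto
    have L2: "(PP * (1 + fps_X)) $ m = PP $ (8*q + b) + PP $ (8*q + (b - 1))"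
      unfolding L using m1 mq bn0 by simp
    show ?thesis
    proof (cases "b = 4")
      case True
      have m4: "m div 4 = 8*a + (2*d+1)" "4 dvd m" using mq qa True by auto
      have "(PP * (1 + fps_X)) $ m = of_bool (rr q)"
        unfolding L2 using True PP_nth8[of 4 q] PP_nth8[of 3 q] by simp
      moreover have "sp 4 PP $ m = of_bool (d < 2 \<and> rr a)"
        unfolding R using m4 PP_nth8[of "2*d+1" a] d by simp
      moreover have "q = 0 \<Longrightarrow> a = 0" using qa by simp
      ultimately show ?thesis using rq by (auto simp: rr0)
    next
      case False
      have nd: "\<not> 4 dvd m" using mq bn0 False b by presburger
      have "PP $ (8*q + b) = PP $ (8*q + (b - 1))"
        using PP_nth8[of b q] PP_nth8[of "b-1" q] b bn0 False by auto
      then have "(PP * (1 + fps_X)) $ m = 0" unfolding L2 by simp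
      then show ?thesis using R nd by simp
    qed
  qed
qed

lemma PP0: "PP $ 0 = 1"
  by (simp add: PP_def rr0)

lemma PP_cube: "PP^3 = 1 + fps_X"
proof -
  have "PP * (1 + fps_X) = PP * PP^3"
    using PP_mult frob4[of PP] by (simp add: power_numeral_reduce eval_nat_numeral)
  moreover have "PP \<noteq> 0" using PP0 by (metis fps_zero_nth zero_neq_one)
  ultimately show ?thesis by simp
qed

lemma QQ_PP: "QQ = PP"
  by (rule cube_unique) (simp_all add: QQ_cube PP_cube QQ0 PP0)

lemma c_PP: "n \<ge> 1 \<Longrightarrow> c n = PP $ (n+1)"
  using QQ_nth QQ_PP by simp

lemma rr_false: "2 * 4^k \<le> q \<Longrightarrow> q < 3 * 4^k \<Longrightarrow> \<not> rr q"
proof (induction k arbitrary: q)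
  case 0
  then have "q = 2" by simp
  have "\<not> rr 2" by (subst rr.simps) simp
  then show ?case using \<open>q = 2\<close> by simp
next
  case (Suc k)
  have q: "q = 4 * (q div 4) + q mod 4" by simp
  have "2 * 4^k \<le> q div 4" using Suc.prems(1) by (simp add: div_le_mono[of "4*(2*4^k)" q 4, simplified])
  moreover have "q div 4 < 3 * 4^k" using Suc.prems(2) by (simp add: less_mult_imp_div_less)
  ultimately have "\<not> rr (q div 4)" by (rule Suc.IH)
  have "(0::nat) < 2 * 4^Suc k" by simp
  then have "q > 0" using Suc.prems(1) by linarith
  then show ?case using rr_eq[of "q mod 4" "q div 4"] q \<open>\<not> rr (q div 4)\<close> by simp
qed

lemma zero_block: "j < 8 * 4^k \<Longrightarrow> c (16 * 4^k - 1 + j) = 0"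
proof -
  assume j: "j < 8 * 4^k"
  have pos: "(1::nat) \<le> 4^k" by simp
  define n where "n = 16 * 4^k - 1 + j"
  have jd: "j = 8*(j div 8) + j mod 8" by simp
  obtain X where X: "X = (4::nat)^k" by simp
  have n1: "n \<ge> 1" "n + 1 = 8 * (2 * 4^k + j div 8) + j mod 8"
    using pos unfolding n_def X[symmetric] by presburger+
  have "2 * 4^k \<le> 2 * 4^k + j div 8" by simp
  moreover have "2 * 4^k + j div 8 < 3 * 4^k" using j by auto
  ultimately have "\<not> rr (2 * 4^k + j div 8)" by (rule rr_false)
  then have "PP $ (n+1) = 0" unfolding n1(2) by (subst PP_nth8) simp_all
  then show ?thesis using c_PP[OF n1(1)] n_def by simp
qed

lemma lt_pow4: "k < (4::nat)^k"
  by (induction k) auto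

theorem mainTheorem8:
  shows "(\<forall>m::nat. m > 0 \<longrightarrow>
            infinite {i::nat. \<forall>j < (4 ^ m - 1) div 3. c (i + j) = 0})
       \<and> (\<forall>L::nat. \<exists>i::nat. \<forall>j < L. c (i + j) = 0)"
proof (intro conjI allI impI)
  fix m :: nat
  assume "m > 0"
  show "infinite {i::nat. \<forall>j < (4 ^ m - 1) div 3. c (i + j) = 0}"
    unfolding infinite_nat_iff_unbounded_le
  proof
    fix N
    define k where "k = N + m"
    have "N < 4^k" using lt_pow4[of k] unfolding k_def by linarith
    then have ge: "N \<le> 16 * 4^k - 1" by linarith
    have mk: "(4::nat)^m \<le> 4^k" unfolding k_def by (rule power_increasing) simp_all
    have "\<forall>j < (4 ^ m - 1) div 3. c (16 * 4^k - 1 + j) = 0"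
    proof (intro allI impI)
      fix j :: nat assume "j < (4 ^ m - 1) div 3"
      moreover have "((4::nat) ^ m - 1) div 3 \<le> 4 ^ m - 1" by (rule div_le_dividend)
      ultimately have "j < 8 * 4^k" using mk by linarith
      then show "c (16 * 4^k - 1 + j) = 0" by (rule zero_block)
    qed
    then show "\<exists>i\<ge>N. i \<in> {i::nat. \<forall>j < (4 ^ m - 1) div 3. c (i + j) = 0}"
      using ge by blast
  qed
next
  fix L :: nat
  have "\<forall>j < L. c (16 * 4^L - 1 + j) = 0"
  proof (intro allI impI)
    fix j :: nat assume "j < L"
    then have "j < 8 * 4^L" using lt_pow4[of L] by linarith
    then show "c (16 * 4^L - 1 + j) = 0" by (rule zero_block)
  qed
  then show "\<exists>i::nat. \<forall>j < L. c (i + j) = 0" by blast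
qed

end
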